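(* Let $n$ be a positive integer and $\lambda$ an infinite cardinal. For every $d$-feebly compact shift-continuous $T_1$-topology $\tau$ on the semilattice $\exp_n\lambda$, a point $x$ is isolated in $(\exp_n\lambda,\tau)$ if and only if $x\in\exp_n\lambda\setminus\exp_{n-1}\lambda$.
   Context: For a positive integer $n$ and a cardinal $\lambda$, $\exp_n\lambda=\{A\subseteq\lambda\colon |A|\leqslant n\}$, regarded as a semilattice under the operation $\cap$ (so $\exp_0\lambda=\{\varnothing\}$). A topology $\tau$ on a semilattice $S$ is shift-continuous if the semilattice operation is separately continuous, i.e. $(S,\tau)$ is a semitopological semilattice. A topological space is $d$-feebly compact if every discrete family of open subsets of it is finite. *)

theory Defs
  imports "HOL-Analysis.Analysis"
begin

text \<open>exp_n(lambda): subsets of the ground set (the universe of type 'a) of size at most n.\<close>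
definition expn :: "nat \<Rightarrow> 'a set set" where
  "expn n = {A. finite A \<and> card A \<le> n}"

definition shift_continuous :: "'a set topology \<Rightarrow> bool" where
  "shift_continuous T \<longleftrightarrow>
     (\<forall>a \<in> topspace T. continuous_map T T (\<lambda>x. x \<inter> a))"

definition discrete_family :: "'b topology \<Rightarrow> 'b set set \<Rightarrow> bool" where
  "discrete_family X \<U> \<longleftrightarrow>
     (\<forall>x \<in> topspace X. \<exists>V. openin X V \<and> x \<in> V \<and>
        (\<forall>U1 \<in> \<U>. \<forall>U2 \<in> \<U>. U1 \<inter> V \<noteq> {} \<and> U2 \<inter> V \<noteq> {} \<longrightarrow> U1 = U2))"

definition d_feebly_compact :: "'b topology \<Rightarrow> bool" where
  "d_feebly_compact X \<longleftrightarrow>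
     (\<forall>\<U>. (\<forall>U \<in> \<U>. openin X U) \<and> discrete_family X \<U> \<longrightarrow> finite \<U>)"

end

theory Submission
  imports Defs
begin

lemma expn_subset:
  assumes "w \<in> expn n" "v \<subseteq> w" shows "v \<in> expn n"
  using assms unfolding expn_def
  by (auto intro: finite_subset dest: card_mono[rotated] )

lemma up_open:
  assumes sc: "shift_continuous \<tau>" and t1: "t1_space \<tau>" and ts: "topspace \<tau> = expn n"
    and y: "y \<in> expn n"
  shows "openin \<tau> {w \<in> topspace \<tau>. y \<subseteq> w}"
proof -
  define P where "P = Pow y - {y}"
  have fy: "finite y" using y by (simp add: expn_def)
  have fP: "finite P" using fy by (simp add: P_def)
  have Psub: "P \<subseteq> topspace \<tau>" using y ts expn_subset unfolding P_def by blast
  have "P = \<Union>((\<lambda>p. {p}) ` P)" by auto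
  moreover have "closedin \<tau> (\<Union>((\<lambda>p. {p}) ` P))"
    using fP Psub t1 by (intro closedin_Union) (auto intro: closedin_t1_singleton)
  ultimately have cP: "closedin \<tau> P" by simp
  have oW: "openin \<tau> (topspace \<tau> - P)" using cP by blast
  have cm: "continuous_map \<tau> \<tau> (\<lambda>w. w \<inter> y)" using sc y ts by (simp add: shift_continuous_def)
  have "openin \<tau> {w \<in> topspace \<tau>. w \<inter> y \<in> topspace \<tau> - P}"
    by (rule openin_continuous_map_preimage[OF cm oW])
  moreover have "{w \<in> topspace \<tau>. w \<inter> y \<in> topspace \<tau> - P} = {w \<in> topspace \<tau>. y \<subseteq> w}"
  proof -
    have "w \<inter> y \<in> topspace \<tau>" if "w \<in> topspace \<tau>" for w
      using that expn_subset ts by blast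
    then show ?thesis unfolding P_def by auto
  qed
  ultimately show ?thesis by simp
qed

lemma up_closed:
  assumes sc: "shift_continuous \<tau>" and t1: "t1_space \<tau>" and ts: "topspace \<tau> = expn n"
    and y: "y \<in> expn n"
  shows "closedin \<tau> {w \<in> topspace \<tau>. y \<subseteq> w}"
proof -
  have cm: "continuous_map \<tau> \<tau> (\<lambda>w. w \<inter> y)" using sc y ts by (simp add: shift_continuous_def)
  have "closedin \<tau> {w \<in> topspace \<tau>. w \<inter> y \<in> {y}}"
    by (rule closedin_continuous_map_preimage[OF cm closedin_t1_singleton[OF t1]]) (use y ts in simp)
  moreover have "{w \<in> topspace \<tau>. w \<inter> y \<in> {y}} = {w \<in> topspace \<tau>. y \<subseteq> w}" by auto
  ultimately show ?thesis by simp
qed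

lemma max_isolated:
  assumes sc: "shift_continuous \<tau>" and t1: "t1_space \<tau>" and ts: "topspace \<tau> = expn n"
    and y: "finite y" "card y = n"
  shows "openin \<tau> {y}"
proof -
  have yn: "y \<in> expn n" using y by (simp add: expn_def)
  have "{w \<in> topspace \<tau>. y \<subseteq> w} = {y}"
  proof -
    have "w = y" if "w \<in> expn n" "y \<subseteq> w" for w
      using that y by (metis card_subset_eq expn_def mem_Collect_eq card_mono antisym)
    then show ?thesis using yn ts by auto
  qed
  then show ?thesis using up_open[OF sc t1 ts yn] by simp
qed

theorem corollary6:
  fixes \<tau> :: "'a set topology" and n :: nat
  assumes "infinite (UNIV :: 'a set)"
    and "n \<ge> 1"
    and "topspace \<tau> = expn n"
    and "shift_continuous \<tau>"
    and "t1_space \<tau>"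
    and "d_feebly_compact \<tau>"
    and "x \<in> expn n"
  shows "openin \<tau> {x} \<longleftrightarrow> x \<in> expn n - expn (n - 1)"
proof
  assume "x \<in> expn n - expn (n - 1)"
  then have "finite x" "card x = n" using assms(2) by (auto simp: expn_def)
  then show "openin \<tau> {x}" using max_isolated assms(3,4,5) by blast
next
  assume ox: "openin \<tau> {x}"
  note sc = assms(4) and t1 = assms(5) and ts = assms(3)
  have fx: "finite x" and cx: "card x \<le> n" using assms(7) by (auto simp: expn_def)
  show "x \<in> expn n - expn (n - 1)"
  proof (rule ccontr)
    assume "x \<notin> expn n - expn (n - 1)"
    then have lt: "card x < n" using assms(2,7) fx by (auto simp: expn_def)
    define m where "m = n - card x"
    have m0: "m > 0" using lt by (simp add: m_def)
    have "infinite (UNIV - x)" using assms(1) fx by (simp add: Diff_infinite_finite)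
    then obtain g :: "nat \<Rightarrow> 'a" where g: "inj g" "range g \<subseteq> UNIV - x"
      using infinite_countable_subset by blast
    define B where "B i = g ` {i*m..<i*m+m}" for i
    have Bx: "B i \<inter> x = {}" for i using g(2) by (auto simp: B_def)
    have Bne: "B i \<noteq> {}" for i using m0 by (auto simp: B_def)
    have fB: "finite (B i)" for i by (simp add: B_def)
    have cB: "card (B i) = m" for i
      unfolding B_def by (subst card_image) (auto intro: inj_on_subset[OF g(1)])
    have divI: "p div m = i" if "p \<in> {i*m..<i*m+m}" for p i
      using that by (intro div_nat_eqI) (auto simp: mult.commute)
    have Bdisj: "i = j" if ai: "a \<in> B i" and aj: "a \<in> B j" for a i j
    proof -
      obtain p where "p \<in> {i*m..<i*m+m}" "a = g p" using ai by (auto simp: B_def)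
      moreover obtain q where "q \<in> {j*m..<j*m+m}" "a = g q" using aj by (auto simp: B_def)
      ultimately have "p \<in> {i*m..<i*m+m}" "q \<in> {j*m..<j*m+m}" "a = g p" "a = g q" by auto
      moreover then have "p = q" using g(1) by (auto dest: injD)
      ultimately show ?thesis using divI by metis
    qed
    define y where "y i = x \<union> B i" for i
    have fy: "finite (y i)" for i using fx fB by (simp add: y_def)
    have cy: "card (y i) = n" for i
      unfolding y_def using fx fB Bx cB lt m_def
      by (subst card_Un_disjoint) (auto simp: Int_commute)
    have yinj: "inj y"
    proof (rule injI)
      fix i j assume "y i = y j"
      obtain a where "a \<in> B i" using Bne by blast
      then have "a \<in> y j" using \<open>y i = y j\<close> by (auto simp: y_def)
      then have "a \<in> B j" using Bx \<open>a \<in> B i\<close> by (auto simp: y_def)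
      then show "i = j" using Bdisj \<open>a \<in> B i\<close> by blast
    qed
    define U where "U = range (\<lambda>i. {y i})"
    have infU: "infinite U"
    proof
      assume "finite U"
      moreover have "inj (\<lambda>i. {y i})" using yinj by (auto simp: inj_def)
      ultimately show False unfolding U_def using finite_imageD by fastforce
    qed
    have oU: "\<forall>u\<in>U. openin \<tau> u"
      unfolding U_def using max_isolated[OF sc t1 ts] fy cy by blast
    have xn: "x \<in> expn n" by fact
    have disc: "discrete_family \<tau> U"
      unfolding discrete_family_def
    proof
      fix z assume z: "z \<in> topspace \<tau>"
      show "\<exists>V. openin \<tau> V \<and> z \<in> V \<and>
        (\<forall>U1 \<in> U. \<forall>U2 \<in> U. U1 \<inter> V \<noteq> {} \<and> U2 \<inter> V \<noteq> {} \<longrightarrow> U1 = U2)"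
      proof (cases "z \<subseteq> x")
        case True
        show ?thesis
        proof (cases "z = x")
          case True
          have "y i \<noteq> x" for i using Bne Bx by (auto simp: y_def)
          then show ?thesis using ox True unfolding U_def by (intro exI[of _ "{x}"]) auto
        next
          case False
          let ?V = "topspace \<tau> - {w \<in> topspace \<tau>. x \<subseteq> w}"
          have "openin \<tau> ?V" using up_closed[OF sc t1 ts xn] by blast
          moreover have "z \<in> ?V" using z False True by auto
          moreover have "{y i} \<inter> ?V = {}" for i by (auto simp: y_def)
          ultimately show ?thesis unfolding U_def by (intro exI[of _ ?V]) auto
        qed
      next
        case False
        then obtain a where a: "a \<in> z" "a \<notin> x" by blast
        let ?V = "{w \<in> topspace \<tau>. z \<subseteq> w}"
        have "openin \<tau> ?V" using up_open[OF sc t1 ts] z ts by simp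
        moreover have "z \<in> ?V" using z by auto
        moreover have "i = j" if "{y i} \<inter> ?V \<noteq> {}" "{y j} \<inter> ?V \<noteq> {}" for i j
        proof -
          have "a \<in> B i" "a \<in> B j" using that a by (auto simp: y_def)
          then show ?thesis using Bdisj by blast
        qed
        ultimately show ?thesis unfolding U_def by (intro exI[of _ ?V]) blast
      qed
    qed
    then have "finite U" using assms(6) oU unfolding d_feebly_compact_def by blast
    then show False using infU by simp
  qed
qed

end
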